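(* Let $\mathcal{M}=(E,\mathcal{C})$ be a loopless oriented matroid with $E=\{e_1,\dots,e_m\}$ ordered $e_1\prec\cdots\prec e_m$, and let $1\le k\le m$. For every $(N_{k-1},A_{k-1})\in\mathscr{N}_{k-1}$, the pair $\psi_k(N_{k-1},A_{k-1})$ belongs to $\mathscr{N}_k$; i.e. $\psi_k:\mathscr{N}_{k-1}\to\mathscr{N}_k$ is well-defined.
   Context: A signed subset of a finite set $E$ is a pair $X=(X^+,X^-)$ of disjoint subsets; support $\underline{X}=X^+\cup X^-$, $-X=(X^-,X^+)$. An oriented matroid $\mathcal{M}=(E,\mathcal{C})$: a collection $\mathcal{C}$ of signed subsets with (C1) empty signed set not in $\mathcal{C}$; (C2) $\mathcal{C}=-\mathcal{C}$; (C3) $\underline{X}\subseteq\underline{Y}$ for $X,Y\in\mathcal{C}$ implies $X=\pm Y$; (C4) for $X,Y\in\mathcal{C}$, $X\neq\pm Y$, $e\in X^+\cap Y^-$ there is $Z\in\mathcal{C}$ with $Z^+\subseteq X^+\cup Y^+-\{e\}$, $Z^-\subseteq X^-\cup Y^--\{e\}$. Underlying matroid $\underline{\mathcal{M}}$: circuits $\underline{X}$, $X\in\mathcal{C}$; loopless means no one-element circuit. Positive circuit: $X^-=\emptyset$; acyclic: no positive circuit. Reorientation ${}_{-A}\mathcal{M}$ ($A\subseteq E$): signed circuits ${}_{-A}X=((X^+-A)\cup(X^-\cap A),(X^--A)\cup(X^+\cap A))$; ${}_{-e}={}_{-\{e\}}$. Deletion $\mathcal{M}\backslash X$ on $E-X$: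 signed circuits $Y\in\mathcal{C}$ with $\underline{Y}\subseteq E-X$. Contraction $\mathcal{M}/X$ on $E-X$: support-minimal nonempty members of $\{(Y^+-X,Y^--X):Y\in\mathcal{C},\underline{Y}-X\ne\emptyset\}$. Broken circuit: circuit of $\underline{\mathcal{M}}$ minus its $\prec$-maximal element; $\mathrm{NBC}(\underline{\mathcal{M}})$: subsets of $E$ containing no broken circuit. $E_k=\{e_1,\dots,e_k\}$; for $N_k\subseteq E_k$, $N_k^c=E_k-N_k$. $\mathscr{N}_k$ is the set of pairs $(N_k,A_k)$ with $N_k\subseteq E_k$, $A_k\subseteq E-E_k$, $N_k\in\mathrm{NBC}(\underline{\mathcal{M}})$, and $\mathcal{M}_k:={}_{-A_k}(\mathcal{M}\backslash N_k^c/N_k)$ acyclic. For $(N_{k-1},A_{k-1})\in\mathscr{N}_{k-1}$ with $\mathcal{M}_{k-1}={}_{-A_{k-1}}(\mathcal{M}\backslash N_{k-1}^c/N_{k-1})$: $\psi_k(N_{k-1},A_{k-1})=(N_{k-1}\cup\{e_k\},A_{k-1})$ if $e_k\notin A_{k-1}$ and ${}_{-e_k}\mathcal{M}_{k-1}$ is acyclic; $=(N_{k-1},A_{k-1})$ if $e_k\notin A_{k-1}$ and ${}_{-e_k}\mathcal{M}_{k-1}$ is not acyclic; $=(N_{k-1},A_{k-1}-\{e_k\})$ if $e_k\in A_{k-1}$. *)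

theory Defs
  imports Main
begin

text \<open>Signed subsets are pairs (X+, X-) of sets.\<close>
type_synonym 'a sset = "'a set \<times> 'a set"

definition supp :: "'a sset \<Rightarrow> 'a set" where
  "supp X = fst X \<union> snd X"

definition sneg :: "'a sset \<Rightarrow> 'a sset" where
  "sneg X = (snd X, fst X)"

definition signed_subset :: "'a set \<Rightarrow> 'a sset \<Rightarrow> bool" where
  "signed_subset E X \<longleftrightarrow> fst X \<inter> snd X = {} \<and> supp X \<subseteq> E"

definition oriented_matroid :: "'a set \<Rightarrow> 'a sset set \<Rightarrow> bool" where
  "oriented_matroid E C \<longleftrightarrow>
     finite E \<and> (\<forall>X\<in>C. signed_subset E X) \<and>
     ({}, {}) \<notin> C \<and>
     (\<forall>X\<in>C. sneg X \<in> C) \<and>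
     (\<forall>X\<in>C. \<forall>Y\<in>C. supp X \<subseteq> supp Y \<longrightarrow> X = Y \<or> X = sneg Y) \<and>
     (\<forall>X\<in>C. \<forall>Y\<in>C. \<forall>e. X \<noteq> Y \<and> X \<noteq> sneg Y \<and> e \<in> fst X \<inter> snd Y \<longrightarrow>
        (\<exists>Z\<in>C. fst Z \<subseteq> fst X \<union> fst Y - {e} \<and> snd Z \<subseteq> snd X \<union> snd Y - {e}))"

definition circuits :: "'a sset set \<Rightarrow> 'a set set" where
  "circuits C = supp ` C"

definition loopless :: "'a sset set \<Rightarrow> bool" where
  "loopless C \<longleftrightarrow> (\<forall>X\<in>C. card (supp X) \<noteq> 1)"

definition acyclic_om :: "'a sset set \<Rightarrow> bool" where
  "acyclic_om C \<longleftrightarrow> \<not> (\<exists>X\<in>C. snd X = {})"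

definition reorient_set :: "'a set \<Rightarrow> 'a sset \<Rightarrow> 'a sset" where
  "reorient_set A X = ((fst X - A) \<union> (snd X \<inter> A), (snd X - A) \<union> (fst X \<inter> A))"

definition reorient :: "'a set \<Rightarrow> 'a sset set \<Rightarrow> 'a sset set" where
  "reorient A C = reorient_set A ` C"

definition deletion :: "'a set \<Rightarrow> 'a sset set \<Rightarrow> 'a set \<Rightarrow> 'a sset set" where
  "deletion E C X = {Y \<in> C. supp Y \<subseteq> E - X}"

definition contraction :: "'a sset set \<Rightarrow> 'a set \<Rightarrow> 'a sset set" where
  "contraction C X =
     (let S = {(fst Y - X, snd Y - X) | Y. Y \<in> C \<and> supp Y - X \<noteq> {}}
      in {Z \<in> S. \<not> (\<exists>Z'\<in>S. supp Z' \<subset> supp Z)})"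

definition pos :: "'a list \<Rightarrow> 'a \<Rightarrow> nat" where
  "pos es x = (LEAST i. i < length es \<and> es ! i = x)"

text \<open>The order e_1 < ... < e_m is given by position in the distinct list es.\<close>
definition broken_circuit :: "'a list \<Rightarrow> 'a sset set \<Rightarrow> 'a set \<Rightarrow> bool" where
  "broken_circuit es C B \<longleftrightarrow>
     (\<exists>c\<in>circuits C. \<exists>e\<in>c. (\<forall>x\<in>c. pos es x \<le> pos es e) \<and> B = c - {e})"

definition NBC :: "'a list \<Rightarrow> 'a sset set \<Rightarrow> 'a set set" where
  "NBC es C = {N. N \<subseteq> set es \<and> \<not> (\<exists>B. broken_circuit es C B \<and> B \<subseteq> N)}"

text \<open>E_k = {e_1,...,e_k}, e_k = es ! (k-1).\<close>
definition Ek :: "'a list \<Rightarrow> nat \<Rightarrow> 'a set" where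
  "Ek es k = set (take k es)"

definition Mk :: "'a list \<Rightarrow> 'a sset set \<Rightarrow> nat \<Rightarrow> 'a set \<Rightarrow> 'a set \<Rightarrow> 'a sset set" where
  "Mk es C k N A = reorient A (contraction (deletion (set es) C (Ek es k - N)) N)"

definition Nscr :: "'a list \<Rightarrow> 'a sset set \<Rightarrow> nat \<Rightarrow> ('a set \<times> 'a set) set" where
  "Nscr es C k = {(N, A). N \<subseteq> Ek es k \<and> A \<subseteq> set es - Ek es k \<and>
        N \<in> NBC es C \<and> acyclic_om (Mk es C k N A)}"

definition psi :: "'a list \<Rightarrow> 'a sset set \<Rightarrow> nat \<Rightarrow> 'a set \<times> 'a set \<Rightarrow> 'a set \<times> 'a set" where
  "psi es C k NA = (let N = fst NA; A = snd NA; e = es ! (k - 1) in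
     if e \<notin> A then
       (if acyclic_om (reorient {e} (Mk es C (k - 1) N A)) then (N \<union> {e}, A) else (N, A))
     else (N, A - {e}))"

end

theory Submission
  imports Defs
begin

definition bad :: "'a set \<Rightarrow> 'a set \<Rightarrow> 'a sset \<Rightarrow> 'a set" where
  "bad A N Y = ((snd Y - A) \<union> (fst Y \<inter> A)) - N"

lemma easy_dir:
  assumes "\<not> acyclic_om (reorient A (contraction (deletion E C D) N))"
  shows "\<exists>Y\<in>C. supp Y \<inter> D = {} \<and> supp Y - N \<noteq> {} \<and> bad A N Y = {}"
proof -
  from assms obtain Z where Z: "Z \<in> contraction (deletion E C D) N" "snd (reorient_set A Z) = {}"
    unfolding acyclic_om_def reorient_def by auto
  have "Z \<in> {(fst Y - N, snd Y - N) | Y. Y \<in> deletion E C D \<and> supp Y - N \<noteq> {}}"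
    using Z(1) unfolding contraction_def Let_def by simp
  then obtain Y where Y: "Y \<in> C" "supp Y \<subseteq> E - D" "supp Y - N \<noteq> {}" "Z = (fst Y - N, snd Y - N)"
    unfolding deletion_def by blast
  have "bad A N Y = {}" using Z(2) Y(4) unfolding bad_def reorient_set_def by auto
  with Y show ?thesis by blast
qed

lemma hard_dir:
  assumes om: "oriented_matroid E C"
    and indep: "\<forall>Y\<in>C. \<not> supp Y \<subseteq> N"
    and ex: "\<exists>Y\<in>C. supp Y \<inter> D = {} \<and> supp Y - N \<noteq> {} \<and> bad A N Y = {}"
  shows "\<not> acyclic_om (reorient A (contraction (deletion E C D) N))"
proof -
  have fin: "finite E" and ss: "\<forall>X\<in>C. signed_subset E X"
    and c4: "\<forall>X\<in>C. \<forall>Y\<in>C. \<forall>e. X \<noteq> Y \<and> X \<noteq> sneg Y \<and> e \<in> fst X \<inter> snd Y \<longrightarrow>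
        (\<exists>Z\<in>C. fst Z \<subseteq> fst X \<union> fst Y - {e} \<and> snd Z \<subseteq> snd X \<union> snd Y - {e})"
    using om unfolding oriented_matroid_def by auto
  have suppE: "supp X \<subseteq> E" if "X \<in> C" for X using ss that unfolding signed_subset_def by auto
  define P where "P Y \<longleftrightarrow> Y \<in> C \<and> supp Y \<inter> D = {} \<and> supp Y - N \<noteq> {} \<and> bad A N Y = {}" for Y
  from ex obtain Y0 where "P Y0" unfolding P_def by blast
  then obtain Y where PY: "P Y" and minY: "\<And>Y'. P Y' \<Longrightarrow> card (supp Y - N) \<le> card (supp Y' - N)"
    using ex_has_least_nat[of P Y0 "\<lambda>Y. card (supp Y - N)"] by blast
  have YC: "Y \<in> C" and YD: "supp Y \<inter> D = {}" and YN: "supp Y - N \<noteq> {}" and Yb: "bad A N Y = {}"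
    using PY unfolding P_def by auto
  define S where "S = {(fst Y - N, snd Y - N) | Y. Y \<in> deletion E C D \<and> supp Y - N \<noteq> {}}"
  define Z where "Z = (fst Y - N, snd Y - N)"
  have ZS: "Z \<in> S" unfolding S_def Z_def deletion_def using YC YD YN suppE[OF YC] by blast
  have Zmin: "\<not> (\<exists>Z'\<in>S. supp Z' \<subset> supp Z)"
  proof
    assume "\<exists>Z'\<in>S. supp Z' \<subset> supp Z"
    then obtain Z' where Z': "Z' \<in> S" "supp Z' \<subset> supp Z" by blast
    then obtain Y' where Y'1: "Y' \<in> C" "supp Y' \<subseteq> E - D" "supp Y' - N \<noteq> {}" "Z' = (fst Y' - N, snd Y' - N)"
      unfolding S_def deletion_def by blast
    have "supp Z' = supp Y' - N" "supp Z = supp Y - N" using Y'1(4) unfolding Z_def supp_def by auto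
    then have Y': "Y' \<in> C" "supp Y' \<inter> D = {}" "supp Y' - N \<noteq> {}" "supp Y' - N \<subset> supp Y - N"
      using Y'1 Z'(2) by auto
    define Q where "Q W \<longleftrightarrow> W \<in> C \<and> supp W \<inter> D = {} \<and> supp W - N \<noteq> {} \<and> supp W - N \<subset> supp Y - N" for W
    have "Q Y'" using Y' unfolding Q_def by blast
    then obtain W where QW: "Q W" and minW: "\<And>W'. Q W' \<Longrightarrow> card (bad A N W) \<le> card (bad A N W')"
      using ex_has_least_nat[of Q Y' "\<lambda>W. card (bad A N W)"] by blast
    have WC: "W \<in> C" and WD: "supp W \<inter> D = {}" and WN: "supp W - N \<noteq> {}" and WY: "supp W - N \<subset> supp Y - N"
      using QW unfolding Q_def by auto
    have finY: "finite (supp Y - N)" using suppE[OF YC] fin finite_subset by blast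
    have finbW: "finite (bad A N W)"
    proof -
      have 1: "bad A N W \<subseteq> supp W" unfolding bad_def supp_def by blast
      have "finite (supp W)" by (rule finite_subset[OF suppE[OF WC] fin])
      then show ?thesis by (rule finite_subset[OF 1])
    qed
    show False
    proof (cases "bad A N W = {}")
      case True
      then have "P W" using WC WD WN unfolding P_def by auto
      from minY[OF this] have "card (supp Y - N) \<le> card (supp W - N)" .
      moreover have "card (supp W - N) < card (supp Y - N)" using WY finY psubset_card_mono by blast
      ultimately show False by simp
    next
      case False
      then obtain f where f: "f \<in> bad A N W" by blast
      have fY: "f \<in> supp Y - N" using f WY unfolding bad_def supp_def by auto
      have neq: "Y \<noteq> W" "Y \<noteq> sneg W" "W \<noteq> Y" "W \<noteq> sneg Y" using WY unfolding sneg_def supp_def by auto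
      have "\<exists>Z0\<in>C. supp Z0 \<subseteq> supp Y \<union> supp W - {f} \<and> bad A N Z0 \<subseteq> bad A N W - {f}"
      proof (cases "f \<in> snd W - A")
        case True
        then have "f \<in> fst Y" using fY Yb unfolding bad_def supp_def by auto
        have "\<exists>Z0\<in>C. fst Z0 \<subseteq> fst Y \<union> fst W - {f} \<and> snd Z0 \<subseteq> snd Y \<union> snd W - {f}"
          by (rule c4[rule_format, OF YC WC]) (use neq True \<open>f \<in> fst Y\<close> in auto)
        then obtain Z0 where Z0: "Z0 \<in> C" "fst Z0 \<subseteq> fst Y \<union> fst W - {f}" "snd Z0 \<subseteq> snd Y \<union> snd W - {f}"
          by blast
        have "bad A N Z0 \<subseteq> bad A N W - {f}"
          using Z0 Yb unfolding bad_def by auto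
        moreover have "supp Z0 \<subseteq> supp Y \<union> supp W - {f}" using Z0 unfolding supp_def by auto
        ultimately show ?thesis using Z0 by blast
      next
        case False
        then have fA: "f \<in> fst W \<inter> A" using f unfolding bad_def by auto
        then have "f \<in> snd Y" using fY Yb unfolding bad_def supp_def by auto
        have "\<exists>Z0\<in>C. fst Z0 \<subseteq> fst W \<union> fst Y - {f} \<and> snd Z0 \<subseteq> snd W \<union> snd Y - {f}"
          by (rule c4[rule_format, OF WC YC]) (use neq fA \<open>f \<in> snd Y\<close> in auto)
        then obtain Z0 where Z0: "Z0 \<in> C" "fst Z0 \<subseteq> fst W \<union> fst Y - {f}" "snd Z0 \<subseteq> snd W \<union> snd Y - {f}"
          by blast
        have "bad A N Z0 \<subseteq> bad A N W - {f}"
          using Z0 Yb unfolding bad_def by auto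
        moreover have "supp Z0 \<subseteq> supp Y \<union> supp W - {f}" using Z0 unfolding supp_def by auto
        ultimately show ?thesis using Z0 by blast
      qed
      then obtain Z0 where Z0: "Z0 \<in> C" "supp Z0 \<subseteq> supp Y \<union> supp W - {f}" "bad A N Z0 \<subseteq> bad A N W - {f}"
        by blast
      have "supp Z0 - N \<noteq> {}" using indep Z0(1) by blast
      moreover have "supp Z0 \<inter> D = {}" using Z0(2) YD WD by blast
      moreover have "supp Z0 - N \<subset> supp Y - N" using Z0(2) WY fY by blast
      ultimately have "Q Z0" using Z0(1) unfolding Q_def by blast
      from minW[OF this] have "card (bad A N W) \<le> card (bad A N Z0)" .
      moreover have "bad A N Z0 \<subset> bad A N W" using Z0(3) f by blast
      then have "card (bad A N Z0) < card (bad A N W)" by (rule psubset_card_mono[OF finbW])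
      ultimately show False by simp
    qed
  qed
  have "Z \<in> contraction (deletion E C D) N"
    using ZS Zmin unfolding contraction_def Let_def S_def by simp
  moreover have "snd (reorient_set A Z) = {}" using Yb unfolding Z_def bad_def reorient_set_def by auto
  ultimately show ?thesis unfolding acyclic_om_def reorient_def by blast
qed

lemma char:
  assumes "oriented_matroid E C" "\<forall>Y\<in>C. \<not> supp Y \<subseteq> N"
  shows "acyclic_om (reorient A (contraction (deletion E C D) N)) \<longleftrightarrow>
    \<not> (\<exists>Y\<in>C. supp Y \<inter> D = {} \<and> supp Y - N \<noteq> {} \<and> bad A N Y = {})"
  using easy_dir hard_dir[OF assms] by blast


lemma pos_nth:
  assumes "distinct es" "i < length es"
  shows "pos es (es ! i) = i"
  unfolding pos_def
proof (rule Least_equality)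
  show "i < length es \<and> es ! i = es ! i" using assms by simp
next
  fix y assume "y < length es \<and> es ! y = es ! i"
  then show "i \<le> y" using assms nth_eq_iff_index_eq by fastforce
qed

lemma pos_set:
  assumes "x \<in> set es"
  shows "pos es x < length es \<and> es ! pos es x = x"
proof -
  from assms obtain i where "i < length es" "es ! i = x" by (auto simp: in_set_conv_nth)
  then show ?thesis unfolding pos_def by (metis (mono_tags, lifting) LeastI)
qed

lemma Ek_pos:
  assumes "distinct es" "x \<in> Ek es j"
  shows "pos es x < j"
proof -
  from assms(2) obtain i where i: "i < length (take j es)" "take j es ! i = x"
    unfolding Ek_def by (auto simp: in_set_conv_nth)
  then have "x = es ! i" "i < length es" "i < j" by auto
  then show ?thesis using pos_nth[OF assms(1)] by simp
qed

lemma nbc_indep: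
  assumes om: "oriented_matroid (set es) C" and NB: "N \<in> NBC es C"
  shows "\<forall>Y\<in>C. \<not> supp Y \<subseteq> N"
proof (intro ballI notI)
  fix Y assume YC: "Y \<in> C" and YN: "supp Y \<subseteq> N"
  have ne: "supp Y \<noteq> {}"
  proof
    assume "supp Y = {}"
    then have "Y = ({}, {})" unfolding supp_def by (cases Y) auto
    with YC om show False unfolding oriented_matroid_def by auto
  qed
  have "finite N" using NB unfolding NBC_def by (auto intro: finite_subset)
  then have fin: "finite (supp Y)" using YN finite_subset by blast
  define p where "p = Max (pos es ` supp Y)"
  have "p \<in> pos es ` supp Y" unfolding p_def using fin ne by simp
  then obtain m where m: "m \<in> supp Y" "pos es m = p" by blast
  have "\<forall>x\<in>supp Y. pos es x \<le> pos es m" using m fin unfolding p_def by simp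
  then have "broken_circuit es C (supp Y - {m})"
    unfolding broken_circuit_def circuits_def using YC m by blast
  moreover have "supp Y - {m} \<subseteq> N" using YN by blast
  ultimately show False using NB unfolding NBC_def by blast
qed

lemma reorient_twice:
  assumes "e \<notin> A"
  shows "reorient {e} (reorient A X) = reorient (insert e A) X"
  unfolding reorient_def image_comp
  by (rule image_cong) (use assms in \<open>auto simp: reorient_set_def\<close>)

theorem lemma2p3:
  fixes es :: "'a list" and C :: "'a sset set" and k :: nat and N A :: "'a set"
  assumes "distinct es"
    and "oriented_matroid (set es) C"
    and "loopless C"
    and "1 \<le> k" and "k \<le> length es"
    and "(N, A) \<in> Nscr es C (k - 1)"
  shows "psi es C k (N, A) \<in> Nscr es C k"
proof -
  note dist = assms(1) and om = assms(2)
  define e where "e = es ! (k - 1)"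
  define D where "D = Ek es (k - 1) - N"
  have klt: "k - 1 < length es" using assms(4,5) by simp
  have eE: "e \<in> set es" unfolding e_def using klt by simp
  have pe: "pos es e = k - 1" unfolding e_def using pos_nth[OF dist klt] .
  have Ek_k: "Ek es k = insert e (Ek es (k - 1))"
  proof -
    have "take k es = take (k - 1) es @ [e]"
      using take_Suc_conv_app_nth[OF klt] assms(4) unfolding e_def by simp
    then show ?thesis unfolding Ek_def by simp
  qed
  have eEk: "e \<notin> Ek es (k - 1)" using Ek_pos[OF dist] pe by fastforce
  have EkE: "Ek es j \<subseteq> set es" for j unfolding Ek_def by (simp add: set_take_subset)
  from assms(6) have NE: "N \<subseteq> Ek es (k - 1)" and AE: "A \<subseteq> set es - Ek es (k - 1)"
    and NB: "N \<in> NBC es C" and acy: "acyclic_om (Mk es C (k - 1) N A)"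
    unfolding Nscr_def by auto
  have ind: "\<forall>Y\<in>C. \<not> supp Y \<subseteq> N" using nbc_indep[OF om NB] .
  have eN: "e \<notin> N" using NE eEk by blast
  have noY0: "\<not> (\<exists>Y\<in>C. supp Y \<inter> D = {} \<and> supp Y - N \<noteq> {} \<and> bad A N Y = {})"
    using acy char[OF om ind, of A D] unfolding Mk_def D_def by simp
  have Dk: "Ek es k - N = insert e D" unfolding D_def Ek_k using eN by blast
  have keep: "acyclic_om (Mk es C k N A')" if "A' - {e} = A - {e}" for A'
  proof -
    have "\<not> (\<exists>Y\<in>C. supp Y \<inter> insert e D = {} \<and> supp Y - N \<noteq> {} \<and> bad A' N Y = {})"
    proof
      assume "\<exists>Y\<in>C. supp Y \<inter> insert e D = {} \<and> supp Y - N \<noteq> {} \<and> bad A' N Y = {}"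
      then obtain Y where Y: "Y \<in> C" "supp Y \<inter> insert e D = {}" "supp Y - N \<noteq> {}" "bad A' N Y = {}"
        by blast
      have "bad A N Y = bad A' N Y"
      proof -
        have "e \<notin> fst Y" "e \<notin> snd Y" using Y(2) unfolding supp_def by auto
        then show ?thesis using that unfolding bad_def by blast
      qed
      then show False using noY0 Y by auto
    qed
    then show ?thesis using char[OF om ind, of A' "insert e D"] unfolding Mk_def Dk by simp
  qed
  show ?thesis
  proof (cases "e \<in> A")
    case True
    then have "psi es C k (N, A) = (N, A - {e})" unfolding psi_def e_def by simp
    moreover have "acyclic_om (Mk es C k N (A - {e}))" by (rule keep) auto
    moreover have "N \<subseteq> Ek es k" "A - {e} \<subseteq> set es - Ek es k" using NE AE Ek_k by auto
    ultimately show ?thesis using NB unfolding Nscr_def by simp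
  next
    case eA: False
    show ?thesis
    proof (cases "acyclic_om (reorient {e} (Mk es C (k - 1) N A))")
      case False
      then have "psi es C k (N, A) = (N, A)" unfolding psi_def e_def using eA e_def by simp
      moreover have "acyclic_om (Mk es C k N A)" by (rule keep) auto
      moreover have "N \<subseteq> Ek es k" "A \<subseteq> set es - Ek es k" using NE AE Ek_k eA by auto
      ultimately show ?thesis using NB unfolding Nscr_def by simp
    next
      case True
      then have ps: "psi es C k (N, A) = (N \<union> {e}, A)" unfolding psi_def e_def using eA e_def by simp
      have noY1: "\<not> (\<exists>Y\<in>C. supp Y \<inter> D = {} \<and> supp Y - N \<noteq> {} \<and> bad (insert e A) N Y = {})"
        using True char[OF om ind, of "insert e A" D] reorient_twice[OF eA]
        unfolding Mk_def D_def by simp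
      have disj: "fst Y \<inter> snd Y = {}" "supp Y \<subseteq> set es" if "Y \<in> C" for Y
        using om that unfolding oriented_matroid_def signed_subset_def by auto
      have negC: "sneg Y \<in> C" if "Y \<in> C" for Y
        using om that unfolding oriented_matroid_def by auto
      have key: False if Y: "Y \<in> C" "supp Y \<inter> D = {}" "e \<in> supp Y" "bad A N Y \<subseteq> {e}" for Y
      proof (cases "e \<in> bad A N Y")
        case False
        then have "bad A N Y = {}" using Y(4) by blast
        then show False using noY0 Y(1,2,3) eN by blast
      next
        case True
        then have "e \<in> snd Y" using eA unfolding bad_def by auto
        then have "e \<notin> fst Y" using disj(1)[OF Y(1)] by blast
        then have "bad (insert e A) N Y = {}" using Y(4) unfolding bad_def by auto
        then show False using noY1 Y(1,2,3) eN by blast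
      qed
      have NB': "N \<union> {e} \<in> NBC es C"
        unfolding NBC_def
      proof (intro CollectI conjI notI)
        show "N \<union> {e} \<subseteq> set es" using NE EkE eE by blast
      next
        assume "\<exists>B. broken_circuit es C B \<and> B \<subseteq> N \<union> {e}"
        then obtain Y m where Y: "Y \<in> C" "m \<in> supp Y" "\<forall>x\<in>supp Y. pos es x \<le> pos es m"
          "supp Y - {m} \<subseteq> N \<union> {e}"
          unfolding broken_circuit_def circuits_def by blast
        show False
        proof (cases "e \<in> supp Y - {m}")
          case False
          then have "broken_circuit es C (supp Y - {m})" "supp Y - {m} \<subseteq> N"
            using Y unfolding broken_circuit_def circuits_def by blast+
          then show False using NB unfolding NBC_def by blast
        next
          case True
          have mE: "m \<in> set es" using disj(2)[OF Y(1)] Y(2) by blast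
          have "pos es e \<le> pos es m" using Y(3) True by blast
          moreover have "pos es e \<noteq> pos es m"
          proof
            assume "pos es e = pos es m"
            then have "e = m" using pos_set[OF mE] pos_set[OF eE] by metis
            then show False using True by blast
          qed
          ultimately have "pos es m > k - 1" using pe by simp
          then have mEk: "m \<notin> Ek es (k - 1)" using Ek_pos[OF dist] by fastforce
          have sY: "supp Y \<subseteq> N \<union> {e, m}" using Y(4) by blast
          have Dint: "supp Y' \<inter> D = {}" if "supp Y' = supp Y" for Y'
            using sY mEk eEk that unfolding D_def by blast
          show False
          proof (cases "m \<in> bad A N Y")
            case False
            have "bad A N Y \<subseteq> {e}" using False sY unfolding bad_def supp_def by blast
            then show False using key[OF Y(1) Dint] True by blast
          next
            case mb: True
            have sn: "supp (sneg Y) = supp Y" unfolding supp_def sneg_def by auto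
            have "m \<notin> bad A N (sneg Y)" using mb disj(1)[OF Y(1)] unfolding bad_def sneg_def by auto
            then have "bad A N (sneg Y) \<subseteq> {e}" using sY sn unfolding bad_def supp_def by blast
            then show False using key[OF negC[OF Y(1)] Dint[OF sn]] True sn by blast
          qed
        qed
      qed
      have Dk': "Ek es k - (N \<union> {e}) = D" unfolding D_def Ek_k using eEk by blast
      have "acyclic_om (Mk es C k (N \<union> {e}) A)"
      proof (rule ccontr)
        assume "\<not> acyclic_om (Mk es C k (N \<union> {e}) A)"
        then obtain Y where Y: "Y \<in> C" "supp Y \<inter> D = {}" "supp Y - (N \<union> {e}) \<noteq> {}"
          "bad A (N \<union> {e}) Y = {}"
          using easy_dir unfolding Mk_def Dk' by blast
        show False
        proof (cases "e \<in> supp Y")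
          case True
          have "bad A N Y \<subseteq> {e}" using Y(4) unfolding bad_def by blast
          then show False using key[OF Y(1,2) True] by blast
        next
          case False
          have "bad A N Y = {}" using Y(4) False unfolding bad_def supp_def by blast
          then show False using noY0 Y by blast
        qed
      qed
      moreover have "N \<union> {e} \<subseteq> Ek es k" "A \<subseteq> set es - Ek es k" using NE AE Ek_k eA by auto
      ultimately show ?thesis using NB' ps unfolding Nscr_def by simp
    qed
  qed
qed

end
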